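(* Let $I=(i_1<i_2<\cdots<i_r)$ be strictly increasing with $r\geq1$, and let $\chi_I=\sum_{\varepsilon\in\{0,1\}^r}a_I^\varepsilon w_I^\varepsilon$ with $a_I^\varepsilon\in\mathcal B$. Then: (A) if $\beta(\chi_I)=\gamma(\chi_I)$, then $\chi_I=aS_I$ for some $a\in\mathcal B$; (B) if $\beta(\chi_I)=0$, then $\chi_I=0$; (C) if $\beta(\chi_I)=\delta(\chi_I)$, then $\chi_I\in\mathcal B\otimes1\otimes\land W$.
   Context: $\mathcal B$ is a graded commutative rational algebra and $W$ a graded rational vector space concentrated in odd degrees with basis $\{w_i\}$ indexed by a totally ordered set. In $\mathcal B\otimes\land W\otimes\land W$ write $w_i^0=w_i=1\otimes w_i\otimes1$, $w_i^1=w'_i=1\otimes1\otimes w_i$, $w_I^\varepsilon=w_{i_1}^{\epsilon_1}\cdots w_{i_r}^{\epsilon_r}$, and $S_I=(w_{i_1}+w'_{i_1})\cdots(w_{i_r}+w'_{i_r})$. In $\mathcal B\otimes\land W^{\otimes3}$ write $w,w',w''$ for $w$ in the three copies. Algebra maps $\alpha,\beta,\gamma,\delta\colon\mathcal B\otimes\land W\otimes\land W\to\mathcal B\otimes\land W\otimes\land W\otimes\land W$, identity on $\mathcal B$: $\alpha(w)=w,\alpha(w')=w'$; $\beta(w)=w+w',\beta(w')=w''$; $\gamma(w)=w,\gamma(w')=w'+w''$; $\delta(w)=w',\delta(w')=w''$. *)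

theory Defs
  imports Main "HOL-Library.Product_Lexorder"
begin

text \<open>B is given by its underlying ring together with the family of homogeneous
components Bd n (n = degree).\<close>

definition graded_comm_rat_alg :: "(nat \<Rightarrow> 'b::ring_1 set) \<Rightarrow> bool" where
  "graded_comm_rat_alg Bd \<longleftrightarrow>
     (\<forall>n. 0 \<in> Bd n \<and> (\<forall>x\<in>Bd n. \<forall>y\<in>Bd n. x + y \<in> Bd n \<and> - x \<in> Bd n)) \<and>
     1 \<in> Bd 0 \<and>
     (\<forall>p q. \<forall>x\<in>Bd p. \<forall>y\<in>Bd q. x * y \<in> Bd (p + q)) \<and>
     (\<forall>p q. \<forall>x\<in>Bd p. \<forall>y\<in>Bd q. x * y = (-1) ^ (p * q) * (y * x)) \<and>
     (\<forall>x. \<exists>!c::nat \<Rightarrow> 'b. finite {n. c n \<noteq> 0} \<and> (\<forall>n. c n \<in> Bd n) \<and>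
                         x = (\<Sum>n\<in>{n. c n \<noteq> 0}. c n)) \<and>
     (\<forall>n::nat. n > 0 \<longrightarrow> (\<exists>u\<in>Bd 0. of_nat n * u = 1 \<and> u * of_nat n = 1))"

text \<open>A generator (i, c) stands for the copy number c of w_i:
  (i,0) = w_i, (i,1) = w'_i, (i,2) = w''_i.
  B \<otimes> \<Lambda>W \<otimes> ... \<otimes> \<Lambda>W (graded tensor product) is the free left B-module on
  monomials, a monomial being a finite set of generators multiplied in increasing
  order (lexicographic order on (i,c)). An element is its coefficient function
  (finite support; infinite sets get coefficient 0).\<close>

type_synonym 'i gen = "'i \<times> nat"

definition ext_sgn :: "'i::linorder gen set \<Rightarrow> 'i gen set \<Rightarrow> int" where
  "ext_sgn S T = (-1) ^ card {(s, t). s \<in> S \<and> t \<in> T \<and> t < s}"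

definition ext_one :: "'i gen set \<Rightarrow> int" where
  "ext_one S = (if S = {} then 1 else 0)"

definition ext_gen :: "'i gen \<Rightarrow> 'i gen set \<Rightarrow> int" where
  "ext_gen g S = (if S = {g} then 1 else 0)"

definition ext_add :: "('i gen set \<Rightarrow> int) \<Rightarrow> ('i gen set \<Rightarrow> int) \<Rightarrow> 'i gen set \<Rightarrow> int" where
  "ext_add x y S = x S + y S"

definition ext_mul :: "('i::linorder gen set \<Rightarrow> int) \<Rightarrow> ('i gen set \<Rightarrow> int) \<Rightarrow> 'i gen set \<Rightarrow> int" where
  "ext_mul x y U = (if finite U then (\<Sum>S\<in>Pow U. ext_sgn S (U - S) * x S * y (U - S)) else 0)"

definition ext_prod :: "('i::linorder gen set \<Rightarrow> int) list \<Rightarrow> 'i gen set \<Rightarrow> int" where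
  "ext_prod xs = foldr ext_mul xs ext_one"

definition bscale :: "'b::ring_1 \<Rightarrow> ('i gen set \<Rightarrow> int) \<Rightarrow> 'i gen set \<Rightarrow> 'b" where
  "bscale b x S = b * of_int (x S)"

text \<open>Algebra map, identity on B, determined by images of generators:
  phi(\<Sum>_S x_S m_S) = \<Sum>_S x_S phi(m_S), phi(m_S) = product of images of generators
  of S in increasing order.  (Defined for finitely supported elements.)\<close>
definition alg_map :: "('i::linorder gen \<Rightarrow> ('i gen set \<Rightarrow> int)) \<Rightarrow> ('i gen set \<Rightarrow> 'b::ring_1)
                        \<Rightarrow> 'i gen set \<Rightarrow> 'b" where
  "alg_map img x U = (\<Sum>S\<in>{S. finite S \<and> x S \<noteq> 0}.
       x S * of_int (ext_prod (map img (sorted_list_of_set S)) U))"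

definition beta_img :: "'i gen \<Rightarrow> 'i gen set \<Rightarrow> int" where
  "beta_img g = (if snd g = 0 then ext_add (ext_gen (fst g, 0)) (ext_gen (fst g, 1))
                 else if snd g = 1 then ext_gen (fst g, 2) else (\<lambda>_. 0))"

definition gamma_img :: "'i gen \<Rightarrow> 'i gen set \<Rightarrow> int" where
  "gamma_img g = (if snd g = 0 then ext_gen (fst g, 0)
                 else if snd g = 1 then ext_add (ext_gen (fst g, 1)) (ext_gen (fst g, 2))
                 else (\<lambda>_. 0))"

definition delta_img :: "'i gen \<Rightarrow> 'i gen set \<Rightarrow> int" where
  "delta_img g = (if snd g = 0 then ext_gen (fst g, 1)
                 else if snd g = 1 then ext_gen (fst g, 2) else (\<lambda>_. 0))"

abbreviation beta_map :: "('i::linorder gen set \<Rightarrow> 'b::ring_1) \<Rightarrow> 'i gen set \<Rightarrow> 'b" where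
  "beta_map \<equiv> alg_map beta_img"
abbreviation gamma_map :: "('i::linorder gen set \<Rightarrow> 'b::ring_1) \<Rightarrow> 'i gen set \<Rightarrow> 'b" where
  "gamma_map \<equiv> alg_map gamma_img"
abbreviation delta_map :: "('i::linorder gen set \<Rightarrow> 'b::ring_1) \<Rightarrow> 'i gen set \<Rightarrow> 'b" where
  "delta_map \<equiv> alg_map delta_img"

text \<open>eps \<in> {0,1}^r is a bool list (True = 1 = primed copy).\<close>
definition wI :: "'i::linorder list \<Rightarrow> bool list \<Rightarrow> 'i gen set \<Rightarrow> int" where
  "wI I eps = ext_prod (map2 (\<lambda>i e. ext_gen (i, if e then 1 else 0)) I eps)"

definition SI :: "'i::linorder list \<Rightarrow> 'i gen set \<Rightarrow> int" where
  "SI I = ext_prod (map (\<lambda>i. ext_add (ext_gen (i, 0)) (ext_gen (i, 1))) I)"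

definition chiI :: "'i::linorder list \<Rightarrow> (bool list \<Rightarrow> 'b::ring_1) \<Rightarrow> 'i gen set \<Rightarrow> 'b" where
  "chiI I a S = (\<Sum>eps\<in>{eps. length eps = length I}. a eps * of_int (wI I eps S))"

text \<open>Membership in B \<otimes> 1 \<otimes> \<Lambda>W: only monomials in the primed generators occur.\<close>
definition in_B_1_LW :: "('i gen set \<Rightarrow> 'b::zero) \<Rightarrow> bool" where
  "in_B_1_LW x \<longleftrightarrow> (\<forall>S. x S \<noteq> 0 \<longrightarrow> (\<forall>g\<in>S. snd g = 1))"

end

theory Submission
  imports Defs
begin

definition indic :: "'i \<Rightarrow> nat set \<Rightarrow> 'i gen set \<Rightarrow> int" where
  "indic i C S = (if \<exists>c\<in>C. S = {(i,c)} then 1 else 0)"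

lemma ext_gen_indic: "ext_gen (i,c) = indic i {c}"
  by (auto simp: ext_gen_def indic_def fun_eq_iff)

lemma ext_add_indic: "c \<noteq> d \<Longrightarrow> ext_add (ext_gen (i,c)) (ext_gen (i,d)) = indic i {c,d}"
  by (auto simp: ext_add_def ext_gen_def indic_def fun_eq_iff)

lemma zero_indic: "(\<lambda>_. 0) = indic i {}" by (simp add: indic_def fun_eq_iff)

lemma ext_prod_indic:
  fixes L :: "('i::linorder \<times> nat set) list"
  assumes "sorted_wrt (<) (map fst L)"
  shows "ext_prod (map (\<lambda>(i,C). indic i C) L) U =
    (if \<exists>us. list_all2 (\<in>) us (map snd L) \<and> U = set (zip (map fst L) us) then 1 else 0)"
  using assms
proof (induction L arbitrary: U)
  case Nil
  then show ?case by (simp add: ext_prod_def ext_one_def)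
next
  case (Cons p L)
  obtain i C where p: "p = (i,C)" by fastforce
  define Q where "Q V \<longleftrightarrow> (\<exists>us. list_all2 (\<in>) us (map snd L) \<and> V = set (zip (map fst L) us))" for V
  define P where "P = ext_prod (map (\<lambda>(i,C). indic i C) L)"
  have IH: "P V = (if Q V then 1 else 0)" for V
    using Cons by (simp add: P_def Q_def)
  have gt: "Q V \<Longrightarrow> x \<in> V \<Longrightarrow> i < fst x" for V x
    using Cons.prems p by (cases x) (auto simp: Q_def dest!: set_zip_leftD)
  have finQ: "Q V \<Longrightarrow> finite V" for V by (auto simp: Q_def)
  have lhs: "ext_prod (map (\<lambda>(i,C). indic i C) (p # L)) U = ext_mul (indic i C) P U"
    by (simp add: ext_prod_def P_def p)
  have rhs: "(\<exists>us. list_all2 (\<in>) us (map snd (p#L)) \<and> U = set (zip (map fst (p#L)) us))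
      \<longleftrightarrow> (\<exists>c\<in>C. \<exists>V. Q V \<and> U = insert (i,c) V)"
  proof
    assume "\<exists>us. list_all2 (\<in>) us (map snd (p#L)) \<and> U = set (zip (map fst (p#L)) us)"
    then obtain z zs where "U = insert (i, z) (set (zip (map fst L) zs))" "z \<in> C"
         "list_all2 (\<in>) zs (map snd L)" by (auto simp: p list_all2_Cons2)
    then show "\<exists>c\<in>C. \<exists>V. Q V \<and> U = insert (i,c) V" unfolding Q_def by blast
  next
    assume "\<exists>c\<in>C. \<exists>V. Q V \<and> U = insert (i,c) V"
    then obtain c us where "c \<in> C" "U = insert (i, c) (set (zip (map fst L) us))"
         "list_all2 (\<in>) us (map snd L)" unfolding Q_def by blast
    then show "\<exists>us. list_all2 (\<in>) us (map snd (p#L)) \<and> U = set (zip (map fst (p#L)) us)"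
      by (intro exI[of _ "c # us"]) (simp add: p)
  qed
  define f where "f S = ext_sgn S (U - S) * indic i C S * P (U - S)" for S
  show ?case
  proof (cases "\<exists>c\<in>C. \<exists>V. Q V \<and> U = insert (i,c) V")
    case True
    then obtain c V where c: "c \<in> C" "Q V" "U = insert (i,c) V" by blast
    have nin: "(i,c) \<notin> V" using gt[OF c(2)] by force
    have finU: "finite U" using finQ[OF c(2)] c(3) by simp
    have UV: "U - {(i,c)} = V" using nin c(3) by auto
    have sgn: "ext_sgn {(i,c)} V = 1"
    proof -
      have "{(s, t). s = (i,c) \<and> t \<in> V \<and> t < s} = {}"
        using gt[OF c(2)] by (fastforce simp: less_prod_def)
      thus ?thesis unfolding ext_sgn_def by (simp only: singleton_iff) simp
    qed
    have z: "f S = 0" if "S \<in> Pow U - {{(i,c)}}" for S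
    proof (rule ccontr)
      assume "f S \<noteq> 0"
      then obtain c' where "c' \<in> C" "S = {(i,c')}" by (auto simp: f_def indic_def split: if_splits)
      with that have "(i,c') \<in> U" "c' \<noteq> c" by auto
      with c(3) have "(i,c') \<in> V" by auto
      with gt[OF c(2)] show False by force
    qed
    have "ext_mul (indic i C) P U = sum f (Pow U)"
      using finU by (simp add: ext_mul_def f_def)
    also have "\<dots> = f {(i,c)} + sum f (Pow U - {{(i,c)}})"
      using finU c(3) by (intro sum.remove) auto
    also have "sum f (Pow U - {{(i,c)}}) = 0" using z by simp
    also have "f {(i,c)} = 1" using UV sgn IH c by (simp add: indic_def f_def)
    finally show ?thesis using lhs rhs True by simp
  next
    case False
    have "ext_mul (indic i C) P U = 0"
    proof (cases "finite U")
      case fin: True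
      have "f S = 0" if "S \<in> Pow U" for S
      proof (rule ccontr)
        assume "f S \<noteq> 0"
        then obtain c' where c': "c' \<in> C" "S = {(i,c')}" and "P (U - S) \<noteq> 0"
          by (auto simp: f_def indic_def split: if_splits)
        then have "Q (U - S)" using IH by (auto split: if_splits)
        moreover have "U = insert (i,c') (U - S)" using that c' by auto
        ultimately show False using False c' by blast
      qed
      hence "sum f (Pow U) = 0" by (intro sum.neutral) blast
      thus ?thesis by (simp add: ext_mul_def fin f_def)
    qed (simp add: ext_mul_def)
    thus ?thesis using lhs rhs False by simp
  qed
qed


lemma sorted_zip: "sorted_wrt (<) I \<Longrightarrow> sorted_wrt (<) (zip I xs)"
proof (induction I arbitrary: xs)
  case Nil then show ?case by simp
next
  case (Cons i I)
  show ?case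
  proof (cases xs)
    case Nil then show ?thesis by simp
  next
    case C: (Cons x xs')
    have "\<forall>y\<in>set (zip I xs'). (i,x) < y"
    proof
      fix y assume "y \<in> set (zip I xs')"
      then have "fst y \<in> set I" using set_zip_leftD[of "fst y" "snd y" I xs'] by simp
      with Cons.prems show "(i,x) < y" by (cases y) (auto simp: less_prod_def)
    qed
    moreover have "sorted_wrt (<) (zip I xs')" using Cons.IH Cons.prems by simp
    ultimately show ?thesis using C by simp
  qed
qed

lemma sorted_list_zip: "sorted_wrt (<) I \<Longrightarrow> sorted_list_of_set (set (zip I xs)) = zip I xs"
  using sorted_zip[of I xs]
  by (metis sorted_list_of_set.idem_if_sorted_distinct strict_sorted_iff subset_UNIV list.map_id)

lemma zip_inj:
  assumes "distinct I" "length xs = length I" "length ys = length I"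
    "set (zip I xs) = set (zip I ys)"
  shows "xs = ys"
proof (rule nth_equalityI)
  show "length xs = length ys" using assms by simp
  fix k assume k: "k < length xs"
  have "(I!k, xs!k) \<in> set (zip I xs)" using k assms(2,3) by (auto simp: set_zip)
  then have "(I!k, xs!k) \<in> set (zip I ys)" using assms(4) by simp
  then have "\<exists>j. (I!k, xs!k) = (I!j, ys!j) \<and> j < length I" using assms(3) unfolding set_zip by auto
  then obtain j where j: "j < length I" "I!j = I!k" "ys!j = xs!k" by auto
  have "j = k" using j k assms nth_eq_iff_index_eq by fastforce
  then show "xs!k = ys!k" using j by simp
qed

lemma list_all2_singletons: "list_all2 (\<lambda>u C. u \<in> C) us (map (\<lambda>x. {g x}) xs) \<longleftrightarrow> us = map g xs"
  by (induction xs arbitrary: us) (auto simp: list_all2_Cons2)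

definition enc :: "bool list \<Rightarrow> nat list" where
  "enc eps = map (\<lambda>e. if e then 1 else 0) eps"

lemma finite_E: "finite {eps::bool list. length eps = n}"
  using finite_lists_length_eq[of "UNIV::bool set" n] by simp

lemma wI_eq:
  assumes "sorted_wrt (<) I" "length eps = length I"
  shows "wI I eps S = (if S = set (zip I (enc eps)) then 1 else 0)"
proof -
  have "map2 (\<lambda>i e. ext_gen (i, if e then 1 else 0)) I eps
      = map (\<lambda>(i,C). indic i C) (zip I (map (\<lambda>e. {if e then 1 else 0}) eps))"
    by (simp add: ext_gen_indic zip_map2 split_def)
  moreover have "map fst (zip I (map (\<lambda>e. {if e then 1 else (0::nat)}) eps)) = I"
    "map snd (zip I (map (\<lambda>e. {if e then 1 else (0::nat)}) eps)) = map (\<lambda>e. {if e then 1 else 0}) eps"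
    using assms by auto
  ultimately show ?thesis
    using ext_prod_indic[of "zip I (map (\<lambda>e. {if e then 1 else (0::nat)}) eps)" S] assms
    by (simp add: wI_def list_all2_singletons enc_def)
qed


lemma length_enc[simp]: "length (enc eps) = length eps" by (simp add: enc_def)

lemma enc_inj: "enc x = enc y \<Longrightarrow> x = y"
proof -
  have "inj (\<lambda>e::bool. if e then (1::nat) else 0)" by (rule injI) (simp split: if_splits)
  then show "enc x = enc y \<Longrightarrow> x = y" unfolding enc_def by (simp add: inj_map_eq_map)
qed

lemma Z_inj:
  fixes I :: "'i::linorder list"
  assumes "sorted_wrt (<) I" "length x = length I" "length y = length I"
    "set (zip I (enc x)) = set (zip I (enc y))"
  shows "x = y"
proof -
  have "distinct I" using strict_sorted_iff[THEN iffD1, OF assms(1)] by simp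
  then have "enc x = enc y" by (rule zip_inj) (use assms(2-4) in simp_all)
  then show ?thesis by (rule enc_inj)
qed

lemma chi_Z:
  fixes I :: "'i::linorder list"
  assumes "sorted_wrt (<) I" "length e0 = length I"
  shows "chiI I a (set (zip I (enc e0))) = a e0"
proof -
  have "chiI I a (set (zip I (enc e0))) =
     (\<Sum>eps\<in>{eps. length eps = length I}. (if e0 = eps then a eps else 0))"
    unfolding chiI_def
  proof (rule sum.cong[OF refl])
    fix eps :: "bool list" assume "eps \<in> {eps. length eps = length I}"
    then have le: "length eps = length I" by simp
    have "set (zip I (enc e0)) = set (zip I (enc eps)) \<longleftrightarrow> e0 = eps"
      using Z_inj[OF assms(1) assms(2) le] by auto
    then show "a eps * of_int (wI I eps (set (zip I (enc e0)))) = (if e0 = eps then a eps else 0)"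
      using wI_eq[OF assms(1) le] by simp
  qed
  also have "\<dots> = a e0" using assms by (simp add: sum.delta' finite_E)
  finally show ?thesis .
qed

lemma chi_0:
  fixes I :: "'i::linorder list"
  assumes "sorted_wrt (<) I" "S \<notin> (\<lambda>eps. set (zip I (enc eps))) ` {eps. length eps = length I}"
  shows "chiI I a S = 0"
  unfolding chiI_def
proof (rule sum.neutral, rule ballI)
  fix eps :: "bool list" assume "eps \<in> {eps. length eps = length I}"
  then have le: "length eps = length I" by simp
  have "S \<noteq> set (zip I (enc eps))" using assms(2) le by blast
  then show "a eps * of_int (wI I eps S) = 0" using wI_eq[OF assms(1) le] by simp
qed

lemma alg_chi:
  fixes I :: "'i::linorder list"
  assumes I: "sorted_wrt (<) I"
  shows "alg_map (\<lambda>g. indic (fst g) (F (snd g))) (chiI I a) U =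
    (\<Sum>eps\<in>{eps. length eps = length I}. a eps *
      of_int (if \<exists>us. list_all2 (\<lambda>u e. u \<in> F (if e then 1 else 0)) us eps \<and> U = set (zip I us) then 1 else 0))"
proof -
  define E where "E = {eps::bool list. length eps = length I}"
  define Z where "Z eps = set (zip I (enc eps))" for eps
  define img where "img = (\<lambda>g::'i gen. indic (fst g) (F (snd g)))"
  define T where "T S = chiI I a S * of_int (ext_prod (map img (sorted_list_of_set S)) U)" for S
  have finE: "finite E" unfolding E_def by (rule finite_E)
  have sub: "{S. finite S \<and> chiI I a S \<noteq> 0} \<subseteq> Z ` E"
    using chi_0[OF I] unfolding Z_def E_def by blast
  have "alg_map img (chiI I a) U = sum T {S. finite S \<and> chiI I a S \<noteq> 0}"
    by (simp add: alg_map_def T_def)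
  also have "\<dots> = sum T (Z ` E)"
    by (rule sum.mono_neutral_left) (use finE sub in \<open>auto simp: T_def Z_def\<close>)
  also have "\<dots> = sum (T \<circ> Z) E"
  proof (rule sum.reindex, rule inj_onI)
    fix x y assume "x \<in> E" "y \<in> E" "Z x = Z y"
    then show "x = y" using Z_inj[OF I, of x y] unfolding Z_def E_def by simp
  qed
  also have "\<dots> = (\<Sum>eps\<in>E. a eps *
      of_int (if \<exists>us. list_all2 (\<lambda>u e. u \<in> F (if e then 1 else 0)) us eps \<and> U = set (zip I us) then 1 else 0))"
  proof (rule sum.cong[OF refl])
    fix eps :: "bool list" assume e: "eps \<in> E"
    have m: "map img (zip I (enc eps)) = map (\<lambda>(i,C). indic i C) (zip I (map F (enc eps)))"
      by (simp add: img_def zip_map2 split_def map_zip_map2)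
    have l: "map fst (zip I (map F (enc eps))) = I" "map snd (zip I (map F (enc eps))) = map F (enc eps)"
      using e by (auto simp: E_def)
    have la: "list_all2 (\<in>) us (map F (enc eps)) \<longleftrightarrow> list_all2 (\<lambda>u e. u \<in> F (if e then 1 else 0)) us eps" for us
      by (simp add: enc_def list_all2_map2)
    show "(T \<circ> Z) eps = a eps *
      of_int (if \<exists>us. list_all2 (\<lambda>u e. u \<in> F (if e then 1 else 0)) us eps \<and> U = set (zip I us) then 1 else 0)"
    proof -
      have c: "chiI I a (Z eps) = a eps" using e chi_Z[OF I, of eps a] by (simp add: Z_def E_def)
      have s: "sorted_list_of_set (Z eps) = zip I (enc eps)" unfolding Z_def by (rule sorted_list_zip[OF I])
      have p: "ext_prod (map img (zip I (enc eps))) U =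
          (if \<exists>us. list_all2 (\<lambda>u e. u \<in> F (if e then 1 else 0)) us eps \<and> U = set (zip I us) then 1 else 0)"
        unfolding m using ext_prod_indic[of "zip I (map F (enc eps))" U] I unfolding l la by simp
      show ?thesis unfolding comp_def T_def c s p ..
    qed
  qed
  finally show ?thesis unfolding img_def E_def .
qed


lemma alg_eval:
  fixes I :: "'i::linorder list"
  assumes I: "sorted_wrt (<) I" and len: "length ts = length I"
    and h: "\<forall>t\<in>set ts. \<forall>e. t \<in> F (if e then 1 else 0) \<longleftrightarrow> e = h t"
  shows "alg_map (\<lambda>g. indic (fst g) (F (snd g))) (chiI I a) (set (zip I ts)) = a (map h ts)"
proof -
  have dI: "distinct I" using strict_sorted_iff[THEN iffD1, OF I] by simp
  have cond: "(\<exists>us. list_all2 (\<lambda>u e. u \<in> F (if e then 1 else 0)) us eps \<and> set (zip I ts) = set (zip I us))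
     \<longleftrightarrow> eps = map h ts" if le: "length eps = length I" for eps
  proof
    assume "\<exists>us. list_all2 (\<lambda>u e. u \<in> F (if e then 1 else 0)) us eps \<and> set (zip I ts) = set (zip I us)"
    then obtain us where us: "list_all2 (\<lambda>u e. u \<in> F (if e then 1 else 0)) us eps"
      "set (zip I ts) = set (zip I us)" by blast
    have "length us = length I" using us(1) le list_all2_lengthD by fastforce
    hence "ts = us" using zip_inj[OF dI len] us(2) by blast
    then have a2: "list_all2 (\<lambda>u e. u \<in> F (if e then 1 else 0)) ts eps" using us(1) by simp
    show "eps = map h ts"
    proof (rule nth_equalityI)
      show "length eps = length (map h ts)" using le len by simp
      fix k assume k: "k < length eps"
      have "ts!k \<in> F (if eps!k then 1 else 0)" using a2 k by (simp add: list_all2_conv_all_nth)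
      moreover have "ts!k \<in> set ts" using k le len by simp
      ultimately show "eps!k = map h ts ! k" using h k le len by simp
    qed
  next
    assume "eps = map h ts"
    then show "\<exists>us. list_all2 (\<lambda>u e. u \<in> F (if e then 1 else 0)) us eps \<and> set (zip I ts) = set (zip I us)"
      using h by (intro exI[of _ ts]) (auto simp: list_all2_conv_all_nth)
  qed
  have "alg_map (\<lambda>g. indic (fst g) (F (snd g))) (chiI I a) (set (zip I ts)) =
     (\<Sum>eps\<in>{eps. length eps = length I}. (if map h ts = eps then a eps else 0))"
    unfolding alg_chi[OF I] by (rule sum.cong[OF refl]) (use cond in auto)
  also have "\<dots> = a (map h ts)" using len by (simp add: sum.delta' finite_E)
  finally show ?thesis .
qed

lemma alg_eval0:
  fixes I :: "'i::linorder list"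
  assumes I: "sorted_wrt (<) I" and len: "length ts = length I"
    and tz: "tz \<in> set ts" "\<forall>e. tz \<notin> F (if e then 1 else 0)"
  shows "alg_map (\<lambda>g. indic (fst g) (F (snd g))) (chiI I a) (set (zip I ts)) = 0"
proof -
  have dI: "distinct I" using strict_sorted_iff[THEN iffD1, OF I] by simp
  have cond: "\<not> (\<exists>us. list_all2 (\<lambda>u e. u \<in> F (if e then 1 else 0)) us eps \<and> set (zip I ts) = set (zip I us))"
    if le: "length eps = length I" for eps
  proof
    assume "\<exists>us. list_all2 (\<lambda>u e. u \<in> F (if e then 1 else 0)) us eps \<and> set (zip I ts) = set (zip I us)"
    then obtain us where us: "list_all2 (\<lambda>u e. u \<in> F (if e then 1 else 0)) us eps"
      "set (zip I ts) = set (zip I us)" by blast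
    have "length us = length I" using us(1) le list_all2_lengthD by fastforce
    hence "ts = us" using zip_inj[OF dI len] us(2) by blast
    then have a2: "list_all2 (\<lambda>u e. u \<in> F (if e then 1 else 0)) ts eps" using us(1) by simp
    obtain k where k: "k < length ts" "ts!k = tz" using tz(1) by (auto simp: in_set_conv_nth)
    have "\<forall>i<length ts. ts!i \<in> F (if eps!i then 1 else 0)" using a2 unfolding list_all2_conv_all_nth by blast
    then have "ts!k \<in> F (if eps!k then 1 else 0)" using k by blast
    then show False using k tz(2) by (metis)
  qed
  show ?thesis unfolding alg_chi[OF I]
  proof (rule sum.neutral, rule ballI)
    fix eps :: "bool list" assume "eps \<in> {eps. length eps = length I}"
    then have le: "length eps = length I" by simp
    show "a eps * of_int (if \<exists>us. list_all2 (\<lambda>u e. u \<in> F (if e then 1 else 0)) us eps \<and>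
        set (zip I ts) = set (zip I us) then 1 else 0) = 0" by (simp only: if_not_P[OF cond[OF le]]) simp
  qed
qed

lemma beta_img_eq: "beta_img = (\<lambda>g. indic (fst g) (if snd g = 0 then {0,1} else if snd g = 1 then {2} else {}))"
  by (auto simp: fun_eq_iff beta_img_def ext_add_def ext_gen_def indic_def)

lemma gamma_img_eq: "gamma_img = (\<lambda>g. indic (fst g) (if snd g = 0 then {0} else if snd g = 1 then {1,2} else {}))"
  by (auto simp: fun_eq_iff gamma_img_def ext_add_def ext_gen_def indic_def)

lemma delta_img_eq: "delta_img = (\<lambda>g. indic (fst g) (if snd g = 0 then {1} else if snd g = 1 then {2} else {}))"
  by (auto simp: fun_eq_iff delta_img_def ext_add_def ext_gen_def indic_def)

lemma map_zip_replicate: "map (\<lambda>(i,C). g i C) (zip I (replicate (length I) x)) = map (\<lambda>i. g i x) I"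
  by (induction I) auto

lemma SI_eq:
  fixes I :: "'i::linorder list"
  assumes I: "sorted_wrt (<) I"
  shows "SI I S = (if \<exists>eps. length eps = length I \<and> S = set (zip I (enc eps)) then 1 else 0)"
proof -
  have "SI I = ext_prod (map (\<lambda>(i,C). indic i C) (zip I (replicate (length I) {0,1})))"
    unfolding SI_def map_zip_replicate by (simp add: ext_add_indic)
  moreover have "(\<exists>us. list_all2 (\<in>) us (replicate (length I) {0::nat,1}) \<and> S = set (zip I us))
     \<longleftrightarrow> (\<exists>eps. length eps = length I \<and> S = set (zip I (enc eps)))"
  proof
    assume "\<exists>us. list_all2 (\<in>) us (replicate (length I) {0::nat,1}) \<and> S = set (zip I us)"
    then obtain us where us: "list_all2 (\<in>) us (replicate (length I) {0::nat,1})" "S = set (zip I us)" by blast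
    have l: "length us = length I" using us(1) list_all2_lengthD by fastforce
    have "enc (map (\<lambda>u. u = 1) us) = us"
      using us(1) by (auto simp: enc_def list_all2_conv_all_nth intro!: nth_equalityI)
    then show "\<exists>eps. length eps = length I \<and> S = set (zip I (enc eps))"
      using us(2) l by (intro exI[of _ "map (\<lambda>u. u = 1) us"]) simp
  next
    assume "\<exists>eps. length eps = length I \<and> S = set (zip I (enc eps))"
    then obtain eps where "length eps = length I" "S = set (zip I (enc eps))" by blast
    then show "\<exists>us. list_all2 (\<in>) us (replicate (length I) {0::nat,1}) \<and> S = set (zip I us)"
      by (intro exI[of _ "enc eps"]) (auto simp: enc_def list_all2_conv_all_nth)
  qed
  ultimately show ?thesis using ext_prod_indic[of "zip I (replicate (length I) {0,1})" S] I by simp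
qed


theorem mainTheorem10:
  fixes Bd :: "nat \<Rightarrow> 'b::ring_1 set"
    and I :: "'i::linorder list"
    and a :: "bool list \<Rightarrow> 'b"
  assumes "graded_comm_rat_alg Bd"
    and "sorted_wrt (<) I"
    and "length I \<ge> 1"
  shows "(beta_map (chiI I a) = gamma_map (chiI I a) \<longrightarrow> (\<exists>c::'b. chiI I a = bscale c (SI I)))
       \<and> (beta_map (chiI I a) = (\<lambda>_. 0) \<longrightarrow> chiI I a = (\<lambda>_. 0))
       \<and> (beta_map (chiI I a) = delta_map (chiI I a) \<longrightarrow> in_B_1_LW (chiI I a))"
proof -
  have I: "sorted_wrt (<) I" by fact
  have bet: "beta_map (chiI I a) (set (zip I ts)) = a (map (\<lambda>t. t = 2) ts)"
    if "length ts = length I" "set ts \<subseteq> {0,1,2}" for ts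
    unfolding beta_img_eq
    by (rule alg_eval[OF I, where F="\<lambda>c. if c = 0 then {0,1} else if c = 1 then {2} else {}"])
       (use that in auto)
  have gam: "gamma_map (chiI I a) (set (zip I ts)) = a (map (\<lambda>t. t \<noteq> 0) ts)"
    if "length ts = length I" "set ts \<subseteq> {0,1,2}" for ts
    unfolding gamma_img_eq
    by (rule alg_eval[OF I, where F="\<lambda>c. if c = 0 then {0} else if c = 1 then {1,2} else {}"])
       (use that in auto)
  have del: "delta_map (chiI I a) (set (zip I ts)) = 0"
    if "length ts = length I" "0 \<in> set ts" for ts
    unfolding delta_img_eq
    by (rule alg_eval0[OF I, where F="\<lambda>c. if c = 0 then {1} else if c = 1 then {2} else {}" and tz="0::nat"])
       (use that in auto)
  have tw: "map (\<lambda>t. t = 2) (map (\<lambda>e. if e then 2 else (0::nat)) eps) = eps" for eps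
    by (induction eps) auto
  have tw0: "beta_map (chiI I a) (set (zip I (map (\<lambda>e. if e then 2 else (0::nat)) eps))) = a eps"
    if "length eps = length I" for eps
    using bet[of "map (\<lambda>e. if e then 2 else (0::nat)) eps"] that tw by auto
  have A: "beta_map (chiI I a) = gamma_map (chiI I a) \<longrightarrow> (\<exists>c::'b. chiI I a = bscale c (SI I))"
  proof
    assume h: "beta_map (chiI I a) = gamma_map (chiI I a)"
    have ae: "a eps = a (replicate (length I) True)" if le: "length eps = length I" for eps
    proof -
      define ts where "ts = map (\<lambda>e. if e then 2 else (1::nat)) eps"
      have l: "length ts = length I" "set ts \<subseteq> {0,1,2}" using le by (auto simp: ts_def)
      have m1: "map (\<lambda>t. t = 2) ts = eps" unfolding ts_def by (induction eps) auto
      have "map (\<lambda>t. t \<noteq> 0) ts = replicate (length eps) True" unfolding ts_def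
        by (induction eps) auto
      then have m2: "map (\<lambda>t. t \<noteq> 0) ts = replicate (length I) True" using le by simp
      have "a eps = beta_map (chiI I a) (set (zip I ts))" using bet[OF l] m1 by simp
      also have "\<dots> = gamma_map (chiI I a) (set (zip I ts))" using h by simp
      also have "\<dots> = a (replicate (length I) True)" using gam[OF l] m2 by simp
      finally show ?thesis .
    qed
    show "\<exists>c. chiI I a = bscale c (SI I)"
    proof (intro exI[of _ "a (replicate (length I) True)"] ext)
      fix S
      show "chiI I a S = bscale (a (replicate (length I) True)) (SI I) S"
      proof (cases "\<exists>eps. length eps = length I \<and> S = set (zip I (enc eps))")
        case True
        then obtain eps where e: "length eps = length I" "S = set (zip I (enc eps))" by blast
        have "chiI I a S = a (replicate (length I) True)" using chi_Z[OF I e(1), of a] ae[OF e(1)] e(2) by simp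
        moreover have "SI I S = 1" using SI_eq[OF I, of S] True by simp
        ultimately show ?thesis by (simp add: bscale_def)
      next
        case False
        then have "S \<notin> (\<lambda>eps. set (zip I (enc eps))) ` {eps. length eps = length I}" by auto
        then have "chiI I a S = 0" by (rule chi_0[OF I])
        moreover have "SI I S = 0" using SI_eq[OF I, of S] False by simp
        ultimately show ?thesis by (simp add: bscale_def)
      qed
    qed
  qed
  have B: "beta_map (chiI I a) = (\<lambda>_. 0) \<longrightarrow> chiI I a = (\<lambda>_. 0)"
  proof
    assume h: "beta_map (chiI I a) = (\<lambda>_. 0)"
    have az: "a eps = 0" if "length eps = length I" for eps
      using tw0[OF that] h by simp
    show "chiI I a = (\<lambda>_. 0)"
    proof
      fix S show "chiI I a S = 0" unfolding chiI_def by (rule sum.neutral) (use az in auto)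
    qed
  qed
  have C: "beta_map (chiI I a) = delta_map (chiI I a) \<longrightarrow> in_B_1_LW (chiI I a)"
  proof
    assume h: "beta_map (chiI I a) = delta_map (chiI I a)"
    have az: "a eps = 0" if le: "length eps = length I" and f: "False \<in> set eps" for eps
    proof -
      have "0 \<in> set (map (\<lambda>e. if e then 2 else (0::nat)) eps)" using f by force
      then have "delta_map (chiI I a) (set (zip I (map (\<lambda>e. if e then 2 else (0::nat)) eps))) = 0"
        using del le by simp
      then show ?thesis using tw0[OF le] h by simp
    qed
    show "in_B_1_LW (chiI I a)" unfolding in_B_1_LW_def
    proof (intro allI impI ballI)
      fix S g assume nz: "chiI I a S \<noteq> 0" and g: "g \<in> S"
      have "S \<in> (\<lambda>eps. set (zip I (enc eps))) ` {eps. length eps = length I}"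
        using chi_0[OF I] nz by blast
      then obtain eps where e: "length eps = length I" "S = set (zip I (enc eps))" by blast
      have "a eps \<noteq> 0" using chi_Z[OF I e(1), of a] nz e(2) by simp
      then have "False \<notin> set eps" using az e(1) by blast
      moreover have "snd g \<in> set (enc eps)" using g e(2) set_zip_rightD[of "fst g" "snd g"] by simp
      ultimately show "snd g = 1" by (auto simp: enc_def)
    qed
  qed
  show ?thesis using A B C by blast
qed

end
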